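(* Assume $q_*(y)>0$ if and only if $\mathrm{numK}(y)=0$. Let $T>0$. Then for every $t\in[0,T)$ and every $y\in\mathcal{Y}$, $$R^\gets_t(y):=\sum_{y'\neq y}R^\gets_t(y',y)=\sum_{y'\neq y}R^\to(y,y')\,\frac{q^\gets_t(y')}{q^\gets_t(y)}\;\le\;\frac{\mathrm{numK}(y)\cdot K}{e^{T-t}-1}.$$
   Context: Fix integers $K\ge2$, $d\ge1$ and $\mathcal{Y}=\{1,\dots,K\}^d$; the symbol $K$ is the mask token. For $y\in\mathcal{Y}$, $\mathrm{numK}(y)=\#\{i: y_i=K\}$. The masked forward process $(\mathbf{y}^\to_t)_{t\ge0}$ is the time-homogeneous continuous-time Markov chain on $\mathcal{Y}$ with $\mathbf{y}^\to_0\sim q_*$ and rate function $R^\to(y,y')$ (rate of jumping from $y'$ to $y$): $R^\to(y,y')=1$ if $y$ and $y'$ differ in exactly one coordinate $i$ and $y_i=K$; $R^\to(y,y)=-(d-\mathrm{numK}(y))$; $0$ otherwise. Its marginals are $q^\to_t$. For $T>0$ the reverse marginals are $q^\gets_t:=q^\to_{T-t}$, $t\in[0,T)$, and $R^\gets_t(y',y):=R^\to(y,y')q^\gets_t(y')/q^\gets_t(y)$ for $y'\neq y$ (under the hypothesis, $q^\to_s(y)>0$ for all $y$ and $s>0$). *)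

theory Defs
  imports "HOL-Analysis.Analysis" "HOL-Library.FuncSet"
begin

text \<open>State space Y = {1..K}^d, states as functions on {0..<d} (extensional, undefined outside).\<close>
definition states :: "nat \<Rightarrow> nat \<Rightarrow> (nat \<Rightarrow> nat) set" where
  "states K d = {0..<d} \<rightarrow>\<^sub>E {1..K}"

definition numK :: "nat \<Rightarrow> nat \<Rightarrow> (nat \<Rightarrow> nat) \<Rightarrow> nat" where
  "numK K d y = card {i. i < d \<and> y i = K}"

text \<open>Forward rate R(y, y'): rate of jumping from y' to y.\<close>
definition Rfwd :: "nat \<Rightarrow> nat \<Rightarrow> (nat \<Rightarrow> nat) \<Rightarrow> (nat \<Rightarrow> nat) \<Rightarrow> real" where
  "Rfwd K d y y' =
     (if (\<exists>i<d. y i = K \<and> y' i \<noteq> K \<and> (\<forall>j<d. j \<noteq> i \<longrightarrow> y j = y' j)) then 1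
      else if y = y' then - (real d - real (numK K d y))
      else 0)"

definition gen :: "nat \<Rightarrow> nat \<Rightarrow> ((nat \<Rightarrow> nat) \<Rightarrow> real) \<Rightarrow> ((nat \<Rightarrow> nat) \<Rightarrow> real)" where
  "gen K d q = (\<lambda>y. \<Sum>y'\<in>states K d. Rfwd K d y y' * q y')"

text \<open>Forward marginals q_t = exp(t L) q_0 of the time-homogeneous CTMC (finite state space).\<close>
definition qfwd :: "nat \<Rightarrow> nat \<Rightarrow> ((nat \<Rightarrow> nat) \<Rightarrow> real) \<Rightarrow> real \<Rightarrow> (nat \<Rightarrow> nat) \<Rightarrow> real" where
  "qfwd K d q0 t y = (\<Sum>n. t ^ n / fact n * ((gen K d ^^ n) q0) y)"

definition qrev :: "nat \<Rightarrow> nat \<Rightarrow> ((nat \<Rightarrow> nat) \<Rightarrow> real) \<Rightarrow> real \<Rightarrow> real \<Rightarrow> (nat \<Rightarrow> nat) \<Rightarrow> real" where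
  "qrev K d q0 T t y = qfwd K d q0 (T - t) y"

definition Rrev :: "nat \<Rightarrow> nat \<Rightarrow> ((nat \<Rightarrow> nat) \<Rightarrow> real) \<Rightarrow> real \<Rightarrow> real \<Rightarrow> (nat \<Rightarrow> nat) \<Rightarrow> (nat \<Rightarrow> nat) \<Rightarrow> real" where
  "Rrev K d q0 T t y' y = Rfwd K d y y' * qrev K d q0 T t y' / qrev K d q0 T t y"

end

theory Submission
  imports Defs
begin


definition Uop :: "nat \<Rightarrow> nat \<Rightarrow> ((nat \<Rightarrow> nat) \<Rightarrow> real) \<Rightarrow> ((nat \<Rightarrow> nat) \<Rightarrow> real)" where
  "Uop K d f = (\<lambda>y. \<Sum>y'\<in>states K d - {y}. Rfwd K d y y' * f y')"

lemma finite_states: "finite (states K d)"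
  unfolding states_def by (simp add: finite_PiE)

lemma Rfwd_diag: "Rfwd K d y y = real (numK K d y) - real d"
  unfolding Rfwd_def by auto

lemma gen_split:
  assumes "y \<in> states K d"
  shows "gen K d f y = Uop K d f y + (real (numK K d y) - real d) * f y"
proof -
  have "gen K d f y = Rfwd K d y y * f y + (\<Sum>y'\<in>states K d - {y}. Rfwd K d y y' * f y')"
    unfolding gen_def using sum.remove[OF finite_states assms] by blast
  then show ?thesis unfolding Uop_def Rfwd_diag by simp
qed

lemma R_numK:
  assumes "y' \<noteq> y" "Rfwd K d y y' \<noteq> 0"
  shows "numK K d y = Suc (numK K d y')"
proof -
  from assms obtain i where i: "i < d" "y i = K" "y' i \<noteq> K" "\<forall>j<d. j \<noteq> i \<longrightarrow> y j = y' j"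
    unfolding Rfwd_def by (auto split: if_splits)
  have "{j. j < d \<and> y j = K} = insert i {j. j < d \<and> y' j = K}"
    using i by auto
  moreover have "i \<notin> {j. j < d \<and> y' j = K}" using i by auto
  ultimately show ?thesis unfolding numK_def by simp
qed

lemma R_numK_real:
  assumes "y' \<noteq> y"
  shows "Rfwd K d y y' * real (numK K d y) = Rfwd K d y y' * (real (numK K d y') + 1)"
  using R_numK[OF assms] by (cases "Rfwd K d y y' = 0") auto

lemma comm1:
  assumes "y \<in> states K d"
  shows "Uop K d (gen K d f) y = gen K d (Uop K d f) y - Uop K d f y"
proof -
  have "Uop K d (gen K d f) y = (\<Sum>y'\<in>states K d - {y}. Rfwd K d y y' * (Uop K d f y' + (real (numK K d y') - real d) * f y'))"
    unfolding Uop_def[of K d "gen K d f"] by (intro sum.cong refl) (simp add: gen_split)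
  also have "\<dots> = (\<Sum>y'\<in>states K d - {y}. Rfwd K d y y' * Uop K d f y') + (\<Sum>y'\<in>states K d - {y}. (real (numK K d y) - real d - 1) * (Rfwd K d y y' * f y'))"
  proof -
    have "\<And>y'. y' \<in> states K d - {y} \<Longrightarrow> Rfwd K d y y' * (Uop K d f y' + (real (numK K d y') - real d) * f y')
       = Rfwd K d y y' * Uop K d f y' + (real (numK K d y) - real d - 1) * (Rfwd K d y y' * f y')"
    proof -
      fix y' assume "y' \<in> states K d - {y}"
      then have "y' \<noteq> y" by auto
      from R_numK_real[OF this, of K d] show "?thesis y'" by (simp add: algebra_simps)
    qed
    then show ?thesis by (simp add: sum.distrib)
  qed
  also have "\<dots> = gen K d (Uop K d f) y - Uop K d f y"
    using gen_split[OF assms, of "Uop K d f"] unfolding Uop_def[of K d f] sum_distrib_left[symmetric]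
    by (simp add: Uop_def algebra_simps)
  finally show ?thesis .
qed

lemma comm2:
  assumes "y \<in> states K d"
  shows "real (numK K d y) * gen K d f y = gen K d (\<lambda>z. real (numK K d z) * f z) y + Uop K d f y"
proof -
  have "real (numK K d y) * Uop K d f y = (\<Sum>y'\<in>states K d - {y}. Rfwd K d y y' * (real (numK K d y') * f y')) + Uop K d f y"
    unfolding Uop_def sum_distrib_left sum.distrib[symmetric]
  proof (intro sum.cong refl)
    fix y' assume "y' \<in> states K d - {y}"
    then have "y' \<noteq> y" by auto
    from R_numK_real[OF this, of K d] 
    show "real (numK K d y) * (Rfwd K d y y' * f y') = Rfwd K d y y' * (real (numK K d y') * f y') + Rfwd K d y y' * f y'"
      by (simp add: algebra_simps)
  qed
  moreover have "(\<Sum>y'\<in>states K d - {y}. Rfwd K d y y' * (real (numK K d y') * f y')) = Uop K d (\<lambda>z. real (numK K d z) * f z) y"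
    unfolding Uop_def by simp
  ultimately have e: "real (numK K d y) * Uop K d f y = Uop K d (\<lambda>z. real (numK K d z) * f z) y + Uop K d f y" by simp
  have g1: "gen K d f y = Uop K d f y + (real (numK K d y) - real d) * f y" using gen_split[OF assms] .
  have g2: "gen K d (\<lambda>z. real (numK K d z) * f z) y = Uop K d (\<lambda>z. real (numK K d z) * f z) y + (real (numK K d y) - real d) * (real (numK K d y) * f y)"
    using gen_split[OF assms] .
  show ?thesis unfolding g1 g2 using e by (simp add: algebra_simps)
qed

lemma gen_cong:
  assumes "\<And>z. z \<in> states K d \<Longrightarrow> f z = g z"
  shows "gen K d f y = gen K d g y"
  unfolding gen_def using assms by simp

lemma gen_lin:
  "gen K d (\<lambda>z. \<Sum>k\<in>A. c k * b k z) y = (\<Sum>k\<in>A. c k * gen K d (b k) y)"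
  unfolding gen_def by (simp add: sum_distrib_left sum.swap[of _ A] algebra_simps)



lemma c_formula:
  assumes q0: "\<And>y. y \<in> states K d \<Longrightarrow> real (numK K d y) * q0 y = 0"
  shows "y \<in> states K d \<Longrightarrow> real (numK K d y) * (gen K d ^^ n) q0 y
     = (\<Sum>k<n. real (n choose k) * Uop K d ((gen K d ^^ k) q0) y)"
proof (induction n arbitrary: y)
  case 0
  then show ?case using q0 by simp
next
  case (Suc n)
  define a where "a = (\<lambda>n. (gen K d ^^ n) q0)"
  define b where "b = (\<lambda>n. Uop K d (a n))"
  have IH: "\<And>z. z \<in> states K d \<Longrightarrow> real (numK K d z) * a n z = (\<Sum>k<n. real (n choose k) * b k z)"
    using Suc.IH unfolding a_def b_def by simp
  have bs: "\<And>k. gen K d (b k) y = b (Suc k) y + b k y"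
    unfolding b_def a_def using comm1[OF Suc.prems] by simp
  have "real (numK K d y) * a (Suc n) y = gen K d (\<lambda>z. real (numK K d z) * a n z) y + b n y"
    unfolding b_def a_def using comm2[OF Suc.prems] by simp
  also have "gen K d (\<lambda>z. real (numK K d z) * a n z) y = gen K d (\<lambda>z. \<Sum>k<n. real (n choose k) * b k z) y"
    by (rule gen_cong) (rule IH)
  also have "\<dots> = (\<Sum>k<n. real (n choose k) * (b (Suc k) y + b k y))"
    by (simp add: gen_lin bs)
  also have "\<dots> + b n y = (\<Sum>k<Suc n. real (Suc n choose k) * b k y)"
  proof -
    have A: "(\<Sum>k<Suc n. real (n choose k) * b k y) = b 0 y + (\<Sum>k<n. real (n choose Suc k) * b (Suc k) y)"
      by (subst sum.lessThan_Suc_shift) simp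
    have B: "(\<Sum>k<Suc n. real (Suc n choose k) * b k y) = b 0 y + (\<Sum>k<n. real (Suc n choose Suc k) * b (Suc k) y)"
      by (subst sum.lessThan_Suc_shift) simp
    have C: "(\<Sum>k<n. real (Suc n choose Suc k) * b (Suc k) y) = (\<Sum>k<n. real (n choose k) * b (Suc k) y) + (\<Sum>k<n. real (n choose Suc k) * b (Suc k) y)"
      by (simp add: sum.distrib[symmetric] algebra_simps)
    have "(\<Sum>k<n. real (n choose k) * (b (Suc k) y + b k y)) + b n y
        = (\<Sum>k<n. real (n choose k) * b (Suc k) y) + (\<Sum>k<Suc n. real (n choose k) * b k y)"
      by (simp add: sum.distrib algebra_simps)
    then show ?thesis using A B C by simp
  qed
  finally show ?case unfolding a_def b_def by simp
qed



lemma numK_le: "numK K d y \<le> d"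
  unfolding numK_def by (rule order.trans[OF card_mono[of "{..<d}"]]) auto

lemma Rfwd_bound: "d \<ge> 1 \<Longrightarrow> \<bar>Rfwd K d y y'\<bar> \<le> real d"
  using numK_le[of K d y] unfolding Rfwd_def by auto

lemma a_bound:
  assumes "d \<ge> 1"
  shows "y \<in> states K d \<Longrightarrow> \<bar>(gen K d ^^ n) q0 y\<bar> \<le> (\<Sum>z\<in>states K d. \<bar>q0 z\<bar>) * (real (card (states K d)) * real d) ^ n"
proof (induction n arbitrary: y)
  case 0
  then show ?case using member_le_sum[of y "states K d" "\<lambda>z. \<bar>q0 z\<bar>"] finite_states by simp
next
  case (Suc n)
  let ?B = "(\<Sum>z\<in>states K d. \<bar>q0 z\<bar>) * (real (card (states K d)) * real d) ^ n"
  have "\<bar>(gen K d ^^ Suc n) q0 y\<bar> = \<bar>\<Sum>y'\<in>states K d. Rfwd K d y y' * (gen K d ^^ n) q0 y'\<bar>"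
    by (simp add: gen_def)
  also have "\<dots> \<le> (\<Sum>y'\<in>states K d. \<bar>Rfwd K d y y' * (gen K d ^^ n) q0 y'\<bar>)" by (rule sum_abs)
  also have "\<dots> \<le> (\<Sum>y'\<in>states K d. real d * ?B)"
  proof (rule sum_mono)
    fix y' assume "y' \<in> states K d"
    then show "\<bar>Rfwd K d y y' * (gen K d ^^ n) q0 y'\<bar> \<le> real d * ?B"
      unfolding abs_mult using Suc.IH Rfwd_bound[OF assms]
      by (intro mult_mono) auto
  qed
  also have "\<dots> = (\<Sum>z\<in>states K d. \<bar>q0 z\<bar>) * (real (card (states K d)) * real d) ^ Suc n"
    by (simp add: algebra_simps)
  finally show ?case .
qed

lemma a_summable:
  assumes "d \<ge> 1" "y \<in> states K d"
  shows "summable (\<lambda>n. \<bar>s ^ n / fact n * (gen K d ^^ n) q0 y\<bar>)"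
proof -
  define B where "B = (\<Sum>z\<in>states K d. \<bar>q0 z\<bar>)"
  define C where "C = real (card (states K d)) * real d"
  have "summable (\<lambda>n. (\<bar>s\<bar> * C) ^ n / fact n)"
    using exp_converges[of "\<bar>s\<bar> * C"] by (simp add: sums_summable divide_inverse mult.commute)
  then have S: "summable (\<lambda>n. B * ((\<bar>s\<bar> * C) ^ n / fact n))" by (rule summable_mult)
  show ?thesis
  proof (rule summable_comparison_test'[OF S])
    fix n
    have "\<bar>(gen K d ^^ n) q0 y\<bar> \<le> B * C ^ n" using a_bound[OF assms] unfolding B_def C_def by blast
    then have "\<bar>s\<bar> ^ n / fact n * \<bar>(gen K d ^^ n) q0 y\<bar> \<le> \<bar>s\<bar> ^ n / fact n * (B * C ^ n)"
      by (intro mult_left_mono) auto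
    then show "norm \<bar>s ^ n / fact n * (gen K d ^^ n) q0 y\<bar> \<le> B * ((\<bar>s\<bar> * C) ^ n / fact n)"
      by (simp add: abs_mult power_abs power_mult_distrib field_simps)
  qed
qed



lemma main_identity:
  assumes d: "d \<ge> 1" and y: "y \<in> states K d"
    and q0: "\<And>y. y \<in> states K d \<Longrightarrow> real (numK K d y) * q0 y = 0"
  shows "real (numK K d y) * qfwd K d q0 s y = (exp s - 1) * Uop K d (qfwd K d q0 s) y"
proof -
  define a where "a = (\<lambda>n. (gen K d ^^ n) q0)"
  define b where "b = (\<lambda>n. Uop K d (a n))"
  define \<beta> where "\<beta> = (\<lambda>n. s ^ n / fact n * b n y)"
  define e where "e = (\<lambda>n::nat. if n = 0 then 0 else s ^ n / fact n)"
  have sa: "\<And>z. z \<in> states K d \<Longrightarrow> summable (\<lambda>n. \<bar>s ^ n / fact n * a n z\<bar>)"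
    unfolding a_def by (rule a_summable[OF d], assumption)
  have sa': "\<And>z. z \<in> states K d \<Longrightarrow> summable (\<lambda>n. s ^ n / fact n * a n z)"
    using sa by (rule summable_rabs_cancel)
  have Q: "\<And>z. qfwd K d q0 s z = (\<Sum>n. s ^ n / fact n * a n z)"
    unfolding qfwd_def a_def by simp
  have "Uop K d (qfwd K d q0 s) y = (\<Sum>y'\<in>states K d - {y}. (\<Sum>n. Rfwd K d y y' * (s ^ n / fact n * a n y')))"
    unfolding Uop_def Q by (intro sum.cong refl) (rule suminf_mult[symmetric], rule sa', auto)
  also have "\<dots> = (\<Sum>n. \<Sum>y'\<in>states K d - {y}. Rfwd K d y y' * (s ^ n / fact n * a n y'))"
    by (rule suminf_sum[symmetric]) (intro summable_mult sa', auto)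
  also have "\<dots> = (\<Sum>n. \<beta> n)"
    unfolding \<beta>_def b_def Uop_def by (simp add: sum_distrib_left algebra_simps)
  finally have UQ: "Uop K d (qfwd K d q0 s) y = (\<Sum>n. \<beta> n)" .
  have sb: "summable (\<lambda>n. norm (\<beta> n))"
  proof (rule summable_comparison_test')
    show "summable (\<lambda>n. \<Sum>y'\<in>states K d - {y}. \<bar>Rfwd K d y y'\<bar> * \<bar>s ^ n / fact n * a n y'\<bar>)"
      by (intro summable_sum summable_mult sa) auto
  next
    fix n
    have "norm (\<beta> n) = \<bar>\<Sum>y'\<in>states K d - {y}. Rfwd K d y y' * (s ^ n / fact n * a n y')\<bar>"
      unfolding \<beta>_def b_def Uop_def by (simp add: sum_distrib_left algebra_simps)
    also have "\<dots> \<le> (\<Sum>y'\<in>states K d - {y}. \<bar>Rfwd K d y y' * (s ^ n / fact n * a n y')\<bar>)"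
      by (rule sum_abs)
    finally show "norm (norm (\<beta> n)) \<le> (\<Sum>y'\<in>states K d - {y}. \<bar>Rfwd K d y y'\<bar> * \<bar>s ^ n / fact n * a n y'\<bar>)"
      by (simp add: abs_mult)
  qed
  have esum: "(\<lambda>n. s ^ n / fact n) sums exp s"
    using exp_converges[of s] by (simp add: divide_inverse mult.commute)
  have e1: "(\<lambda>n. if n = 0 then (1::real) else 0) sums 1"
    using sums_single[of 0 "\<lambda>_. (1::real)"] by simp
  have "(\<lambda>n. s ^ n / fact n - (if n = 0 then 1 else 0)) sums (exp s - 1)"
    by (rule sums_diff[OF esum e1])
  moreover have "(\<lambda>n. s ^ n / fact n - (if n = 0 then 1 else 0)) = e"
    unfolding e_def by auto
  ultimately have es: "e sums (exp s - 1)" by simp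
  have se: "summable (\<lambda>n. norm (e n))"
  proof -
    have "summable (\<lambda>n. \<bar>s\<bar> ^ n / fact n)"
      using exp_converges[of "\<bar>s\<bar>"] by (simp add: sums_summable divide_inverse mult.commute)
    then show ?thesis
      by (rule summable_comparison_test'[where N=0]) (simp add: e_def power_abs)
  qed
  have "(\<Sum>n. \<beta> n) * (\<Sum>n. e n) = (\<Sum>n. \<Sum>i\<le>n. \<beta> i * e (n - i))"
    by (rule Cauchy_product[OF sb se])
  also have "\<dots> = (\<Sum>n. s ^ n / fact n * (real (numK K d y) * a n y))"
  proof (rule arg_cong[where f=suminf], rule ext)
    fix n
    have "(\<Sum>i\<le>n. \<beta> i * e (n - i)) = (\<Sum>i<n. \<beta> i * e (n - i))"
      unfolding lessThan_Suc_atMost[symmetric] by (simp add: e_def)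
    also have "\<dots> = (\<Sum>i<n. s ^ n / fact n * (real (n choose i) * b i y))"
    proof (intro sum.cong refl)
      fix i assume "i \<in> {..<n}"
      then have i: "i < n" by simp
      then have "s ^ n = s ^ i * s ^ (n - i)" by (simp add: power_add[symmetric])
      moreover have "real (n choose i) = fact n / (fact i * fact (n - i))"
        using binomial_fact[of i n] i by simp
      ultimately show "\<beta> i * e (n - i) = s ^ n / fact n * (real (n choose i) * b i y)"
        unfolding \<beta>_def e_def using i by (simp add: field_simps)
    qed
    also have "\<dots> = s ^ n / fact n * (real (numK K d y) * a n y)"
      using c_formula[of K d q0, OF q0 y, of n] unfolding a_def b_def by (simp add: sum_distrib_left)
    finally show "(\<Sum>i\<le>n. \<beta> i * e (n - i)) = s ^ n / fact n * (real (numK K d y) * a n y)" .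
  qed
  also have "\<dots> = real (numK K d y) * qfwd K d q0 s y"
  proof -
    have "(\<Sum>n. s ^ n / fact n * (real (numK K d y) * a n y)) = (\<Sum>n. real (numK K d y) * (s ^ n / fact n * a n y))"
      by (simp add: algebra_simps)
    also have "\<dots> = real (numK K d y) * (\<Sum>n. s ^ n / fact n * a n y)"
      by (rule suminf_mult[OF sa'[OF y]])
    finally show ?thesis unfolding Q .
  qed
  finally have F: "(\<Sum>n. \<beta> n) * (\<Sum>n. e n) = real (numK K d y) * qfwd K d q0 s y" .
  have "(\<Sum>n. e n) = exp s - 1" using es by (rule sums_unique[symmetric])
  then show ?thesis using F UQ by (simp add: mult.commute)
qed



theorem lemma3:
  fixes K d :: nat and qstar :: "(nat \<Rightarrow> nat) \<Rightarrow> real" and T :: real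
  assumes "K \<ge> 2" and "d \<ge> 1"
    and "\<forall>y\<in>states K d. qstar y \<ge> 0"
    and "(\<Sum>y\<in>states K d. qstar y) = 1"
    and "\<forall>y\<in>states K d. qstar y > 0 \<longleftrightarrow> numK K d y = 0"
    and "T > 0"
  shows "\<forall>t\<in>{0..<T}. \<forall>y\<in>states K d.
           (\<Sum>y'\<in>states K d - {y}. Rrev K d qstar T t y' y) \<le>
             real (numK K d y) * real K / (exp (T - t) - 1)"
proof (intro ballI)
  fix t y assume t: "t \<in> {0..<T}" and y: "y \<in> states K d"
  define s where "s = T - t"
  have s: "s > 0" using t unfolding s_def by auto
  have es: "exp s - 1 > 0" using s by simp
  define Q where "Q = qfwd K d qstar s"
  have q0: "\<And>z. z \<in> states K d \<Longrightarrow> real (numK K d z) * qstar z = 0"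
  proof -
    fix z assume z: "z \<in> states K d"
    show "real (numK K d z) * qstar z = 0"
    proof (cases "numK K d z = 0")
      case False
      then have "\<not> qstar z > 0" using assms(5) z by simp
      then have "qstar z = 0" using assms(3) z by force
      then show ?thesis by simp
    qed simp
  qed
  have MI: "real (numK K d y) * Q y = (exp s - 1) * Uop K d Q y"
    unfolding Q_def by (rule main_identity[OF assms(2) y q0])
  have "(\<Sum>y'\<in>states K d - {y}. Rrev K d qstar T t y' y) = Uop K d Q y / Q y"
    unfolding Rrev_def qrev_def Uop_def Q_def s_def by (simp add: sum_divide_distrib)
  also have "\<dots> \<le> real (numK K d y) * real K / (exp s - 1)"
  proof (cases "Q y = 0")
    case True
    then show ?thesis using es by simp
  next
    case False
    have "Uop K d Q y = real (numK K d y) * Q y / (exp s - 1)" using MI es by (simp add: field_simps)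
    then have "Uop K d Q y / Q y = real (numK K d y) / (exp s - 1)" using False by simp
    also have "\<dots> \<le> real (numK K d y) * real K / (exp s - 1)"
    proof -
      have "real (numK K d y) * 1 \<le> real (numK K d y) * real K" using assms(1) by (intro mult_left_mono) auto
      then show ?thesis using es by (intro divide_right_mono) auto
    qed
    finally show ?thesis .
  qed
  finally show "(\<Sum>y'\<in>states K d - {y}. Rrev K d qstar T t y' y) \<le> real (numK K d y) * real K / (exp (T - t) - 1)"
    unfolding s_def .
qed

end
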